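(* Let $\Omega=[\alpha,\beta]$ with $\alpha<\beta$, let $F$ be an $\Omega$-tropical polynomial with set of non-smooth points $H\subset(\alpha,\beta)$ and multiplicity function $\mu$, let $p\in(\alpha,\beta)\setminus H$, and let $(a,b)$ be the connected component of $(\alpha,\beta)\setminus H$ containing $p$ (so each of $a,b$ is either a point of $H$ or an endpoint of $\Omega$). Put $c=\min(p-a,\,b-p)$. Then $G_pF$ is an $\Omega$-tropical polynomial, and its multiset of non-smooth points (points counted with multiplicity) is obtained from that of $F$ by removing one copy of $a$ if $a\neq\alpha$, removing one copy of $b$ if $b\neq\beta$, and adding one copy of $a+c$ and one copy of $b-c$ (so that if $a+c=b-c$, i.e. $p=(a+b)/2$, a point $p$ of multiplicity $2$ is added). Equivalently, with $M_F:\Omega\to\mathbb{Z}_{\ge0}\cup\{\infty\}$ defined by $M_F(\alpha)=M_F(\beta)=\infty$, $M_F=\mu$ on $H$ and $M_F=0$ on $(\alpha,\beta)\setminus H$, one has $M_{G_pF}(x)=M_F(x)-\delta_{a,x}-\delta_{b,x}+\delta_{a+c,x}+\delta_{b-c,x}$ for all $x\in\Omega$ (Kronecker deltas, with $\infty-1=\infty$).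
   Context: Let $\Omega=[\alpha,\beta]$ be a compact interval with $\alpha<\beta$. An $\Omega$-tropical series is a function $F:\Omega\to[0,\infty)$ with $F(\alpha)=F(\beta)=0$ that can be written as $F(z)=\inf_{v\in\mathbb{Z}}(a_v+zv)$ for some real numbers $a_v$; its canonical coefficients are $a_v=\sup_{z\in\Omega}(F(z)-zv)$. Such $F$ is concave piecewise linear with integer slopes; its set $H$ of non-smooth points is the set of points of $(\alpha,\beta)$ where $F$ is not differentiable, with multiplicity $\mu(h)=F'(h^-)-F'(h^+)\in\mathbb{Z}_{\ge1}$. An $\Omega$-tropical polynomial is an $\Omega$-tropical series with finite $H$. For $p\in(\alpha,\beta)$ the operator $G_p$ is defined as follows: if $F$ is not differentiable at $p$, then $G_pF=F$; otherwise there is a unique $w\in\mathbb{Z}$ with $F(z)=a_w+zw$ near $p$ ($a_v$ canonical coefficients of $F$), and $G_pF(z)=\inf_{v\in\mathbb{Z}}(b_v+zv)$ for $z\in\Omega$, where $b_v=a_v$ for $v\neq w$ and $b_w=\min_{v\in\mathbb{Z}\setminus\{w\}}(a_v+pv)-pw$. *)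

theory Defs
  imports "HOL-Analysis.Analysis"
begin

text \<open>Functions are of type real => real; only their values on Omega = [alpha, beta] matter.\<close>

definition is_inf_int :: "real \<Rightarrow> (int \<Rightarrow> real) \<Rightarrow> bool" where
  "is_inf_int y g \<longleftrightarrow> (\<forall>v. y \<le> g v) \<and> (\<forall>y'. (\<forall>v. y' \<le> g v) \<longrightarrow> y' \<le> y)"

definition trop_series :: "real \<Rightarrow> real \<Rightarrow> (real \<Rightarrow> real) \<Rightarrow> bool" where
  "trop_series \<alpha> \<beta> F \<longleftrightarrow>
     (\<forall>z\<in>{\<alpha>..\<beta>}. 0 \<le> F z) \<and> F \<alpha> = 0 \<and> F \<beta> = 0 \<and>
     (\<exists>a :: int \<Rightarrow> real. \<forall>z\<in>{\<alpha>..\<beta>}. is_inf_int (F z) (\<lambda>v. a v + z * of_int v))"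

definition canon_coeff :: "real \<Rightarrow> real \<Rightarrow> (real \<Rightarrow> real) \<Rightarrow> int \<Rightarrow> real" where
  "canon_coeff \<alpha> \<beta> F v = Sup ((\<lambda>z. F z - z * of_int v) ` {\<alpha>..\<beta>})"

definition nonsmooth :: "real \<Rightarrow> real \<Rightarrow> (real \<Rightarrow> real) \<Rightarrow> real set" where
  "nonsmooth \<alpha> \<beta> F = {z \<in> {\<alpha><..<\<beta>}. \<not> F differentiable (at z)}"

definition trop_poly :: "real \<Rightarrow> real \<Rightarrow> (real \<Rightarrow> real) \<Rightarrow> bool" where
  "trop_poly \<alpha> \<beta> F \<longleftrightarrow> trop_series \<alpha> \<beta> F \<and> finite (nonsmooth \<alpha> \<beta> F)"

definition mult :: "(real \<Rightarrow> real) \<Rightarrow> real \<Rightarrow> real" where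
  "mult F h = (THE d. (F has_real_derivative d) (at_left h))
             - (THE d. (F has_real_derivative d) (at_right h))"

definition Mfun :: "real \<Rightarrow> real \<Rightarrow> (real \<Rightarrow> real) \<Rightarrow> real \<Rightarrow> ereal" where
  "Mfun \<alpha> \<beta> F x =
     (if x = \<alpha> \<or> x = \<beta> then \<infinity>
      else if x \<in> nonsmooth \<alpha> \<beta> F then ereal (mult F x) else 0)"

definition Gop :: "real \<Rightarrow> real \<Rightarrow> real \<Rightarrow> (real \<Rightarrow> real) \<Rightarrow> (real \<Rightarrow> real)" where
  "Gop \<alpha> \<beta> p F =
     (if \<not> F differentiable (at p) then F
      else
        (let a = canon_coeff \<alpha> \<beta> F;
             w = (THE w :: int. \<exists>\<epsilon>>0. \<forall>z. \<bar>z - p\<bar> < \<epsilon> \<longrightarrow> F z = a w + z * of_int w);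
             b = (\<lambda>v. if v = w
                       then Inf ((\<lambda>u. a u + p * of_int u) ` (UNIV - {w})) - p * of_int w
                       else a v)
         in (\<lambda>z. Inf (range (\<lambda>v. b v + z * of_int v)))))"

end

theory Submission
  imports Defs
begin


lemma onesided_left:
  fixes f :: "real \<Rightarrow> real"
  assumes "eventually (\<lambda>z. z \<le> x \<longrightarrow> f z = f x + l * (z - x)) (nhds x)"
  shows "(f has_real_derivative l) (at_left x)"
proof -
  have d: "((\<lambda>z. f x + l * (z - x)) has_real_derivative l) (at x within {..x})"
    by (auto intro!: derivative_eq_intros)
  have "(f has_real_derivative l) (at x within {..x})"
    using has_field_derivative_cong_ev[of x x "{..x}" f "\<lambda>z. f x + l * (z - x)" l l "{..x}"] assms d
    by (auto elim: eventually_mono)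
  then show ?thesis by (rule DERIV_subset) auto
qed

lemma onesided_right:
  fixes f :: "real \<Rightarrow> real"
  assumes "eventually (\<lambda>z. x \<le> z \<longrightarrow> f z = f x + r * (z - x)) (nhds x)"
  shows "(f has_real_derivative r) (at_right x)"
proof -
  have d: "((\<lambda>z. f x + r * (z - x)) has_real_derivative r) (at x within {x..})"
    by (auto intro!: derivative_eq_intros)
  have "(f has_real_derivative r) (at x within {x..})"
    using has_field_derivative_cong_ev[of x x "{x..}" f "\<lambda>z. f x + r * (z - x)" r r "{x..}"] assms d
    by (auto elim: eventually_mono)
  then show ?thesis by (rule DERIV_subset) auto
qed

lemma kink_lemma:
  fixes f :: "real \<Rightarrow> real"
  assumes L: "eventually (\<lambda>z. z \<le> x \<longrightarrow> f z = f x + l * (z - x)) (nhds x)"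
    and R: "eventually (\<lambda>z. x \<le> z \<longrightarrow> f z = f x + r * (z - x)) (nhds x)"
  shows "(THE d. (f has_real_derivative d) (at_left x)) = l"
    and "(THE d. (f has_real_derivative d) (at_right x)) = r"
    and "f differentiable (at x) \<longleftrightarrow> l = r"
proof -
  have dl: "(f has_real_derivative l) (at_left x)" by (rule onesided_left[OF L])
  have dr: "(f has_real_derivative r) (at_right x)" by (rule onesided_right[OF R])
  show "(THE d. (f has_real_derivative d) (at_left x)) = l"
    using dl by (auto intro!: the_equality dest: has_field_derivative_unique)
  show "(THE d. (f has_real_derivative d) (at_right x)) = r"
    using dr by (auto intro!: the_equality dest: has_field_derivative_unique)
  show "f differentiable (at x) \<longleftrightarrow> l = r"
  proof
    assume "f differentiable (at x)"
    then obtain D where D: "(f has_real_derivative D) (at x)"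
      by (auto simp: real_differentiable_def)
    have "D = l" using has_field_derivative_unique[OF has_field_derivative_at_within[OF D] dl] by simp
    moreover have "D = r" using has_field_derivative_unique[OF has_field_derivative_at_within[OF D] dr] by simp
    ultimately show "l = r" by simp
  next
    assume "l = r"
    have ev: "eventually (\<lambda>z. f z = f x + l * (z - x)) (nhds x)"
      using eventually_conj[OF L R] by (rule eventually_mono) (use \<open>l = r\<close> in auto)
    have "((\<lambda>z. f x + l * (z - x)) has_real_derivative l) (at x)"
      by (auto intro!: derivative_eq_intros)
    then have "(f has_real_derivative l) (at x)"
      using DERIV_cong_ev[OF refl ev refl] by simp
    then show "f differentiable (at x)" by (auto simp: real_differentiable_def)
  qed
qed



definition Dfun :: "real \<Rightarrow> real \<Rightarrow> real \<Rightarrow> real \<Rightarrow> real" where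
  "Dfun a b c z = max 0 (min (min (z - a) (b - z)) c)"

definition dlf :: "real \<Rightarrow> real \<Rightarrow> real \<Rightarrow> real \<Rightarrow> real" where
  "dlf a b c x = (if x \<le> a then 0 else if x \<le> a + c then 1 else if x \<le> b - c then 0 else if x \<le> b then -1 else 0)"
definition drf :: "real \<Rightarrow> real \<Rightarrow> real \<Rightarrow> real \<Rightarrow> real" where
  "drf a b c x = (if x < a then 0 else if x < a + c then 1 else if x < b - c then 0 else if x < b then -1 else 0)"

lemma D_left:
  assumes "0 < c" "a + c \<le> b - c"
  shows "eventually (\<lambda>z. z \<le> x \<longrightarrow> Dfun a b c z = Dfun a b c x + dlf a b c x * (z - x)) (nhds x)"
  unfolding eventually_nhds_metric dist_real_def
proof -
  consider "x \<le> a" | "a < x" "x \<le> a + c" | "a + c < x" "x \<le> b - c" | "b - c < x" "x \<le> b" | "b < x"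
    by linarith
  then show "\<exists>d>0. \<forall>z. \<bar>z - x\<bar> < d \<longrightarrow> z \<le> x \<longrightarrow> Dfun a b c z = Dfun a b c x + dlf a b c x * (z - x)"
  proof cases
    case 1 then show ?thesis using assms
      by (intro exI[of _ 1]) (auto simp: Dfun_def dlf_def)
  next
    case 2 then show ?thesis using assms
      by (intro exI[of _ "x - a"]) (auto simp: Dfun_def dlf_def abs_if min_def max_def)
  next
    case 3 then show ?thesis using assms
      by (intro exI[of _ "x - (a + c)"]) (auto simp: Dfun_def dlf_def abs_if min_def max_def)
  next
    case 4 then show ?thesis using assms
      by (intro exI[of _ "x - (b - c)"]) (auto simp: Dfun_def dlf_def abs_if min_def max_def)
  next
    case 5 then show ?thesis using assms
      by (intro exI[of _ "x - b"]) (auto simp: Dfun_def dlf_def abs_if min_def max_def)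
  qed
qed

lemma D_right:
  assumes "0 < c" "a + c \<le> b - c"
  shows "eventually (\<lambda>z. x \<le> z \<longrightarrow> Dfun a b c z = Dfun a b c x + drf a b c x * (z - x)) (nhds x)"
  unfolding eventually_nhds_metric dist_real_def
proof -
  consider "x < a" | "a \<le> x" "x < a + c" | "a + c \<le> x" "x < b - c" | "b - c \<le> x" "x < b" | "b \<le> x"
    by linarith
  then show "\<exists>d>0. \<forall>z. \<bar>z - x\<bar> < d \<longrightarrow> x \<le> z \<longrightarrow> Dfun a b c z = Dfun a b c x + drf a b c x * (z - x)"
  proof cases
    case 1 then show ?thesis using assms
      by (intro exI[of _ "a - x"]) (auto simp: Dfun_def drf_def abs_if min_def max_def)
  next
    case 2 then show ?thesis using assms
      by (intro exI[of _ "a + c - x"]) (auto simp: Dfun_def drf_def abs_if min_def max_def)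
  next
    case 3 then show ?thesis using assms
      by (intro exI[of _ "b - c - x"]) (auto simp: Dfun_def drf_def abs_if min_def max_def)
  next
    case 4 then show ?thesis using assms
      by (intro exI[of _ "b - x"]) (auto simp: Dfun_def drf_def abs_if min_def max_def)
  next
    case 5 then show ?thesis using assms
      by (intro exI[of _ 1]) (auto simp: Dfun_def drf_def abs_if min_def max_def)
  qed
qed

lemma D_kink:
  assumes "0 < c" "a + c \<le> b - c"
  shows "dlf a b c x - drf a b c x = - (if a = x then 1 else 0) - (if b = x then 1 else 0)
              + (if a + c = x then 1 else 0) + (if b - c = x then 1 else 0)"
  using assms unfolding dlf_def drf_def by auto



lemma ts_rep:
  assumes "trop_series \<alpha> \<beta> F"
  obtains a0 where "\<And>z. z \<in> {\<alpha>..\<beta>} \<Longrightarrow> is_inf_int (F z) (\<lambda>v. a0 v + z * of_int v)"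
  using assms unfolding trop_series_def by blast

lemma E1:
  assumes ts: "trop_series \<alpha> \<beta> F" and z: "z \<in> {\<alpha>..\<beta>}"
  shows "F z \<le> canon_coeff \<alpha> \<beta> F v + z * of_int v"
proof -
  obtain a0 where a0: "\<And>z. z \<in> {\<alpha>..\<beta>} \<Longrightarrow> is_inf_int (F z) (\<lambda>v. a0 v + z * of_int v)"
    using ts_rep[OF ts] by blast
  have bdd: "bdd_above ((\<lambda>z. F z - z * of_int v) ` {\<alpha>..\<beta>})"
    unfolding bdd_above_def
  proof (intro exI[of _ "a0 v"] ballI)
    fix t assume "t \<in> (\<lambda>z. F z - z * of_int v) ` {\<alpha>..\<beta>}"
    then obtain z where z: "z \<in> {\<alpha>..\<beta>}" "t = F z - z * of_int v" by blast
    have "F z \<le> a0 v + z * of_int v" using a0[OF z(1)] by (auto simp: is_inf_int_def)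
    then show "t \<le> a0 v" using z(2) by simp
  qed
  have "F z - z * of_int v \<le> canon_coeff \<alpha> \<beta> F v"
    unfolding canon_coeff_def by (rule cSup_upper[OF _ bdd]) (use z in auto)
  then show ?thesis by simp
qed

lemma Aub:
  assumes "\<alpha> \<le> \<beta>" and "\<And>z. z \<in> {\<alpha>..\<beta>} \<Longrightarrow> F z \<le> K + z * of_int v"
  shows "canon_coeff \<alpha> \<beta> F v \<le> K"
  unfolding canon_coeff_def
  by (rule cSup_least) (use assms in \<open>auto simp: algebra_simps\<close>)

lemma E2:
  assumes ts: "trop_series \<alpha> \<beta> F" and z: "z \<in> {\<alpha>..\<beta>}"
    and y: "\<And>v. y \<le> canon_coeff \<alpha> \<beta> F v + z * of_int v"
  shows "y \<le> F z"
proof -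
  obtain a0 where a0: "\<And>z. z \<in> {\<alpha>..\<beta>} \<Longrightarrow> is_inf_int (F z) (\<lambda>v. a0 v + z * of_int v)"
    using ts_rep[OF ts] by blast
  have le: "canon_coeff \<alpha> \<beta> F v \<le> a0 v" for v
    by (rule Aub) (use z a0 in \<open>auto simp: is_inf_int_def\<close>)
  have "\<forall>v. y \<le> a0 v + z * of_int v" using y le by (metis add_le_cancel_right order_trans)
  then show ?thesis using a0[OF z] by (auto simp: is_inf_int_def)
qed

lemma local_lemma:
  assumes ts: "trop_series \<alpha> \<beta> F" and x: "\<alpha> < x" "x < \<beta>"
  shows "\<exists>l r::int. r \<le> l \<and> canon_coeff \<alpha> \<beta> F l + x * of_int l = F x
      \<and> canon_coeff \<alpha> \<beta> F r + x * of_int r = F x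
      \<and> eventually (\<lambda>z. z \<le> x \<longrightarrow> F z = F x + of_int l * (z - x)) (nhds x)
      \<and> eventually (\<lambda>z. x \<le> z \<longrightarrow> F z = F x + of_int r * (z - x)) (nhds x)"
proof -
  define A where "A = canon_coeff \<alpha> \<beta> F"
  have E1': "\<And>z v. z \<in> {\<alpha>..\<beta>} \<Longrightarrow> F z \<le> A v + z * of_int v"
    unfolding A_def using E1[OF ts] by blast
  have E2': "\<And>z y. z \<in> {\<alpha>..\<beta>} \<Longrightarrow> (\<And>v. y \<le> A v + z * of_int v) \<Longrightarrow> y \<le> F z"
    unfolding A_def using E2[OF ts] by blast
  have F0: "F \<alpha> = 0" "F \<beta> = 0" and Fnn: "\<And>z. z \<in> {\<alpha>..\<beta>} \<Longrightarrow> 0 \<le> F z"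
    using ts by (auto simp: trop_series_def)
  define \<delta> where "\<delta> = min (x - \<alpha>) (\<beta> - x) / 2"
  have \<delta>: "0 < \<delta>" "x - \<delta> \<ge> \<alpha> + \<delta>" "x + \<delta> \<le> \<beta> - \<delta>" using x by (auto simp: \<delta>_def)
  define K where "K = A 0"
  have FK: "\<And>z. z \<in> {\<alpha>..\<beta>} \<Longrightarrow> F z \<le> K" using E1'[of _ 0] by (simp add: K_def)
  have K0: "0 \<le> K" using FK[of x] Fnn[of x] x by auto
  define N :: int where "N = \<lceil>(K + 1) / \<delta>\<rceil>"
  define V where "V = {-N..N}"
  have finV: "finite V" by (simp add: V_def)
  have "(K + 1) / \<delta> > 0" using K0 \<delta> by auto
  then have N0: "0 \<le> N" by (simp add: N_def)
  have big: "K + 1 < A v + z * of_int v" if z: "z \<in> {x-\<delta>..x+\<delta>}" and v: "v \<notin> V" for z v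
  proof -
    have vN: "N + 1 \<le> \<bar>v\<bar>" using v by (auto simp: V_def)
    have "(K + 1) / \<delta> \<le> of_int N" unfolding N_def by linarith
    then have "(K + 1) / \<delta> < of_int \<bar>v\<bar>" using vN by linarith
    then have kv: "K + 1 < \<delta> * of_int \<bar>v\<bar>" using \<delta>(1) by (simp add: pos_divide_less_eq mult.commute)
    have a1: "0 \<le> A v + \<alpha> * of_int v" using E1'[of \<alpha> v] F0 x by auto
    have a2: "0 \<le> A v + \<beta> * of_int v" using E1'[of \<beta> v] F0 x by auto
    show ?thesis
    proof (cases "v > 0")
      case True
      have "\<delta> * of_int v \<le> (z - \<alpha>) * of_int v"
        using True z \<delta> by (intro mult_right_mono) auto
      then have "\<delta> * of_int \<bar>v\<bar> \<le> (z - \<alpha>) * of_int v" using True by simp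
      then show ?thesis using kv a1 by (simp add: algebra_simps)
    next
      case False
      have "\<delta> * of_int (- v) \<le> (\<beta> - z) * of_int (- v)"
        using False z \<delta> by (intro mult_right_mono) auto
      then have "\<delta> * of_int \<bar>v\<bar> \<le> (\<beta> - z) * of_int (- v)" using False by simp
      then show ?thesis using kv a2 by (simp add: algebra_simps)
    qed
  qed
  have xin: "x \<in> {x-\<delta>..x+\<delta>}" using \<delta> by auto
  have xO: "x \<in> {\<alpha>..\<beta>}" using x by auto
  define S where "S = {v \<in> V. A v + x * of_int v = F x}"
  have finS: "finite S" using finV by (simp add: S_def)
  have "0 \<in> V" using N0 by (simp add: V_def)
  define m where "m = Min ((\<lambda>v. A v + x * of_int v) ` V)"
  have mle: "\<And>v. v \<in> V \<Longrightarrow> m \<le> A v + x * of_int v" unfolding m_def using finV by simp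
  have "m \<in> (\<lambda>v. A v + x * of_int v) ` V" unfolding m_def using finV \<open>0 \<in> V\<close> by (intro Min_in) auto
  then obtain v0 where v0: "v0 \<in> V" "m = A v0 + x * of_int v0" by blast
  have "m \<le> F x"
  proof (rule E2'[OF xO])
    fix v show "m \<le> A v + x * of_int v"
    proof (cases "v \<in> V")
      case True then show ?thesis by (rule mle)
    next
      case False
      have "m \<le> K" using mle[OF \<open>0 \<in> V\<close>] by (simp add: K_def)
      then show ?thesis using big[OF xin False] by linarith
    qed
  qed
  moreover have "F x \<le> m" using v0 E1'[OF xO] by simp
  ultimately have "v0 \<in> S" using v0 by (simp add: S_def)
  then have Sne: "S \<noteq> {}" by auto
  define l where "l = Max S"
  define r where "r = Min S"
  have lS: "l \<in> S" and rS: "r \<in> S" using finS Sne by (auto simp: l_def r_def)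
  have Sb: "\<And>v. v \<in> S \<Longrightarrow> r \<le> v \<and> v \<le> l" using finS by (auto simp: l_def r_def)
  have rl: "r \<le> l" using Sb[OF lS] by simp
  have lx: "A l + x * of_int l = F x" and rx: "A r + x * of_int r = F x"
    using lS rS by (auto simp: S_def)
  have ev1: "eventually (\<lambda>z. \<forall>v\<in>V-S. F x + of_int l * (z - x) < A v + z * of_int v
          \<and> F x + of_int r * (z - x) < A v + z * of_int v) (nhds x)"
  proof (rule eventually_ball_finite)
    show "finite (V - S)" using finV by simp
    show "\<forall>v\<in>V-S. eventually (\<lambda>z. F x + of_int l * (z - x) < A v + z * of_int v
          \<and> F x + of_int r * (z - x) < A v + z * of_int v) (nhds x)"
    proof
      fix v assume v: "v \<in> V - S"
      have gt: "F x < A v + x * of_int v" using v E1'[OF xO, of v] by (auto simp: S_def)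
      have t1: "((\<lambda>z. A v + z * of_int v - (F x + of_int l * (z - x))) \<longlongrightarrow>
                 A v + x * of_int v - (F x + of_int l * (x - x))) (nhds x)"
        by (intro tendsto_intros filterlim_ident)
      have t2: "((\<lambda>z. A v + z * of_int v - (F x + of_int r * (z - x))) \<longlongrightarrow>
                 A v + x * of_int v - (F x + of_int r * (x - x))) (nhds x)"
        by (intro tendsto_intros filterlim_ident)
      have e1: "eventually (\<lambda>z. 0 < A v + z * of_int v - (F x + of_int l * (z - x))) (nhds x)"
        using order_tendstoD(1)[OF t1, of 0] gt by simp
      have e2: "eventually (\<lambda>z. 0 < A v + z * of_int v - (F x + of_int r * (z - x))) (nhds x)"
        using order_tendstoD(1)[OF t2, of 0] gt by simp
      show "eventually (\<lambda>z. F x + of_int l * (z - x) < A v + z * of_int v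
          \<and> F x + of_int r * (z - x) < A v + z * of_int v) (nhds x)"
        using eventually_conj[OF e1 e2] by (rule eventually_mono) auto
    qed
  qed
  have ev2: "eventually (\<lambda>z. z \<in> {x-\<delta>..x+\<delta>}) (nhds x)"
    unfolding eventually_nhds_metric dist_real_def
    by (intro exI[of _ \<delta>]) (use \<delta> in auto)
  have FxK: "F x < K + 1" using FK[OF xO] by simp
  have t3: "((\<lambda>z. F x + of_int l * (z - x)) \<longlongrightarrow> F x + of_int l * (x - x)) (nhds x)"
    by (intro tendsto_intros filterlim_ident)
  have t4: "((\<lambda>z. F x + of_int r * (z - x)) \<longlongrightarrow> F x + of_int r * (x - x)) (nhds x)"
    by (intro tendsto_intros filterlim_ident)
  have ev3: "eventually (\<lambda>z. F x + of_int l * (z - x) < K + 1 \<and> F x + of_int r * (z - x) < K + 1) (nhds x)"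
    using eventually_conj[OF order_tendstoD(2)[OF t3, of "K+1"] order_tendstoD(2)[OF t4, of "K+1"]] FxK by simp
  have evall: "eventually (\<lambda>z. (\<forall>v\<in>V-S. F x + of_int l * (z - x) < A v + z * of_int v
          \<and> F x + of_int r * (z - x) < A v + z * of_int v) \<and> z \<in> {x-\<delta>..x+\<delta>} \<and>
          (F x + of_int l * (z - x) < K + 1 \<and> F x + of_int r * (z - x) < K + 1)) (nhds x)"
    using eventually_conj[OF ev1 eventually_conj[OF ev2 ev3]] by simp
  have L: "eventually (\<lambda>z. z \<le> x \<longrightarrow> F z = F x + of_int l * (z - x)) (nhds x)"
    using evall
  proof (rule eventually_mono, intro impI)
    fix z assume H: "(\<forall>v\<in>V-S. F x + of_int l * (z - x) < A v + z * of_int v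
          \<and> F x + of_int r * (z - x) < A v + z * of_int v) \<and> z \<in> {x-\<delta>..x+\<delta>} \<and>
          (F x + of_int l * (z - x) < K + 1 \<and> F x + of_int r * (z - x) < K + 1)"
      and zx: "z \<le> x"
    have zO: "z \<in> {\<alpha>..\<beta>}" using H \<delta> by auto
    have "F z \<le> A l + z * of_int l" by (rule E1'[OF zO])
    also have "\<dots> = F x + of_int l * (z - x)" using lx by (simp add: algebra_simps)
    finally have le1: "F z \<le> F x + of_int l * (z - x)" .
    have "F x + of_int l * (z - x) \<le> F z"
    proof (rule E2'[OF zO])
      fix v
      show "F x + of_int l * (z - x) \<le> A v + z * of_int v"
      proof (cases "v \<in> S")
        case True
        then have "A v + x * of_int v = F x" and "v \<le> l" using Sb by (auto simp: S_def)
        moreover have "of_int l * (z - x) \<le> of_int v * (z - x)"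
          using \<open>v \<le> l\<close> zx by (intro mult_right_mono_neg) auto
        ultimately show ?thesis by (simp add: algebra_simps)
      next
        case False
        show ?thesis
        proof (cases "v \<in> V")
          case True then have "v \<in> V - S" using False by simp
          then show ?thesis using H by (meson less_imp_le)
        next
          case nv: False then show ?thesis using big[of z v] H by auto
        qed
      qed
    qed
    then show "F z = F x + of_int l * (z - x)" using le1 by simp
  qed
  have R: "eventually (\<lambda>z. x \<le> z \<longrightarrow> F z = F x + of_int r * (z - x)) (nhds x)"
    using evall
  proof (rule eventually_mono, intro impI)
    fix z assume H: "(\<forall>v\<in>V-S. F x + of_int l * (z - x) < A v + z * of_int v
          \<and> F x + of_int r * (z - x) < A v + z * of_int v) \<and> z \<in> {x-\<delta>..x+\<delta>} \<and>
          (F x + of_int l * (z - x) < K + 1 \<and> F x + of_int r * (z - x) < K + 1)"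
      and zx: "x \<le> z"
    have zO: "z \<in> {\<alpha>..\<beta>}" using H \<delta> by auto
    have "F z \<le> A r + z * of_int r" by (rule E1'[OF zO])
    also have "\<dots> = F x + of_int r * (z - x)" using rx by (simp add: algebra_simps)
    finally have le1: "F z \<le> F x + of_int r * (z - x)" .
    have "F x + of_int r * (z - x) \<le> F z"
    proof (rule E2'[OF zO])
      fix v
      show "F x + of_int r * (z - x) \<le> A v + z * of_int v"
      proof (cases "v \<in> S")
        case True
        then have "A v + x * of_int v = F x" and "r \<le> v" using Sb by (auto simp: S_def)
        moreover have "of_int r * (z - x) \<le> of_int v * (z - x)"
          using \<open>r \<le> v\<close> zx by (intro mult_right_mono) auto
        ultimately show ?thesis by (simp add: algebra_simps)
      next
        case False
        show ?thesis
        proof (cases "v \<in> V")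
          case True then have "v \<in> V - S" using False by simp
          then show ?thesis using H by (meson less_imp_le)
        next
          case nv: False then show ?thesis using big[of z v] H by auto
        qed
      qed
    qed
    then show "F z = F x + of_int r * (z - x)" using le1 by simp
  qed
  show ?thesis using rl lx rx L R unfolding A_def by blast
qed



lemma lin_limit_right:
  fixes K m x0 t :: real
  assumes "0 < t" "\<And>z. x0 < z \<Longrightarrow> z < x0 + t \<Longrightarrow> K + z * m \<le> 0"
  shows "K + x0 * m \<le> 0"
proof (rule ccontr)
  assume "\<not> ?thesis"
  then have g: "K + x0 * m > 0" by simp
  define e where "e = min (t/2) ((K + x0 * m) / (2 * (\<bar>m\<bar> + 1)))"
  have e: "0 < e" "e < t" using g assms by (auto simp: e_def)
  have "e * (\<bar>m\<bar> + 1) \<le> (K + x0 * m) / 2"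
  proof -
    have "e \<le> (K + x0 * m) / (2 * (\<bar>m\<bar> + 1))" by (simp add: e_def)
    then show ?thesis by (simp add: field_simps)
  qed
  moreover have "- (e * \<bar>m\<bar>) \<le> e * m" using e by (simp add: abs_if)
  moreover have "K + (x0 + e) * m \<le> 0" using assms(2)[of "x0 + e"] e by simp
  ultimately show False using g e by (simp add: algebra_simps)
qed

lemma lin_limit_left:
  fixes K m x0 t :: real
  assumes "0 < t" "\<And>z. x0 - t < z \<Longrightarrow> z < x0 \<Longrightarrow> K + z * m \<le> 0"
  shows "K + x0 * m \<le> 0"
proof -
  have "K + (- x0) * (- m) \<le> 0"
    by (rule lin_limit_right[OF assms(1)]) (use assms(2)[of "- _"] in force)
  then show ?thesis by simp
qed

lemma endpt_left:
  assumes ts: "trop_series \<alpha> \<beta> F" and x0: "\<alpha> \<le> x0" "x0 + t \<le> \<beta>" and t: "0 < t"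
    and lin: "\<And>z. x0 < z \<Longrightarrow> z < x0 + t \<Longrightarrow> F z = canon_coeff \<alpha> \<beta> F w + z * of_int w"
  shows "F x0 = canon_coeff \<alpha> \<beta> F w + x0 * of_int w"
proof -
  let ?A = "canon_coeff \<alpha> \<beta> F"
  have x0O: "x0 \<in> {\<alpha>..\<beta>}" using x0 t by auto
  have "F x0 \<le> ?A w + x0 * of_int w" by (rule E1[OF ts x0O])
  moreover have "?A w + x0 * of_int w \<le> F x0"
  proof (rule E2[OF ts x0O])
    fix v
    have "(?A w - ?A v) + x0 * of_int (w - v) \<le> 0"
    proof (rule lin_limit_right[OF t])
      fix z assume z: "x0 < z" "z < x0 + t"
      have "z \<in> {\<alpha>..\<beta>}" using z x0 by auto
      then have "F z \<le> ?A v + z * of_int v" by (rule E1[OF ts])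
      then show "(?A w - ?A v) + z * of_int (w - v) \<le> 0" using lin[OF z] by (simp add: algebra_simps)
    qed
    then show "?A w + x0 * of_int w \<le> ?A v + x0 * of_int v" by (simp add: algebra_simps)
  qed
  ultimately show ?thesis by simp
qed

lemma endpt_right:
  assumes ts: "trop_series \<alpha> \<beta> F" and x0: "x0 \<le> \<beta>" "\<alpha> \<le> x0 - t" and t: "0 < t"
    and lin: "\<And>z. x0 - t < z \<Longrightarrow> z < x0 \<Longrightarrow> F z = canon_coeff \<alpha> \<beta> F w + z * of_int w"
  shows "F x0 = canon_coeff \<alpha> \<beta> F w + x0 * of_int w"
proof -
  let ?A = "canon_coeff \<alpha> \<beta> F"
  have x0O: "x0 \<in> {\<alpha>..\<beta>}" using x0 t by auto
  have "F x0 \<le> ?A w + x0 * of_int w" by (rule E1[OF ts x0O])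
  moreover have "?A w + x0 * of_int w \<le> F x0"
  proof (rule E2[OF ts x0O])
    fix v
    have "(?A w - ?A v) + x0 * of_int (w - v) \<le> 0"
    proof (rule lin_limit_left[OF t])
      fix z assume z: "x0 - t < z" "z < x0"
      have "z \<in> {\<alpha>..\<beta>}" using z x0 by auto
      then have "F z \<le> ?A v + z * of_int v" by (rule E1[OF ts])
      then show "(?A w - ?A v) + z * of_int (w - v) \<le> 0" using lin[OF z] by (simp add: algebra_simps)
    qed
    then show "?A w + x0 * of_int w \<le> ?A v + x0 * of_int v" by (simp add: algebra_simps)
  qed
  ultimately show ?thesis by simp
qed



lemma ereal_ind:
  "ereal (m + (- (if P then 1 else 0) - (if Q then 1 else 0) + (if R then 1 else 0) + (if S then 1 else 0)))
   = ereal m - (if P then 1 else 0) - (if Q then 1 else 0) + (if R then 1 else 0) + (if S then 1 else 0)"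
  by (cases P; cases Q; cases R; cases S) (simp_all add: one_ereal_def zero_ereal_def)

theorem mainTheorem3:
  fixes \<alpha> \<beta> p a b :: real and F :: "real \<Rightarrow> real"
  assumes "\<alpha> < \<beta>"
    and "trop_poly \<alpha> \<beta> F"
    and "p \<in> {\<alpha><..<\<beta>}" and "p \<notin> nonsmooth \<alpha> \<beta> F"
    and "a < p" and "p < b"
    and "a \<in> nonsmooth \<alpha> \<beta> F \<union> {\<alpha>}" and "b \<in> nonsmooth \<alpha> \<beta> F \<union> {\<beta>}"
    and "{a<..<b} \<inter> nonsmooth \<alpha> \<beta> F = {}"
  defines "c \<equiv> min (p - a) (b - p)"
  shows "trop_poly \<alpha> \<beta> (Gop \<alpha> \<beta> p F) \<and>
         (\<forall>x\<in>{\<alpha>..\<beta>}. Mfun \<alpha> \<beta> (Gop \<alpha> \<beta> p F) x =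
            Mfun \<alpha> \<beta> F x - (if a = x then 1 else 0) - (if b = x then 1 else 0)
              + (if a + c = x then 1 else 0) + (if b - c = x then 1 else 0))"
proof -
  note ab = assms(1) assms(3-9)
  have ts: "trop_series \<alpha> \<beta> F" and finH: "finite (nonsmooth \<alpha> \<beta> F)"
    using assms(2) by (auto simp: trop_poly_def)
  define A where "A = canon_coeff \<alpha> \<beta> F"
  define H where "H = nonsmooth \<alpha> \<beta> F"
  have E1': "\<And>z v. z \<in> {\<alpha>..\<beta>} \<Longrightarrow> F z \<le> A v + z * of_int v"
    unfolding A_def using E1[OF ts] by blast
  have E2': "\<And>z y. z \<in> {\<alpha>..\<beta>} \<Longrightarrow> (\<And>v. y \<le> A v + z * of_int v) \<Longrightarrow> y \<le> F z"
    unfolding A_def using E2[OF ts] by blast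
  have F0: "F \<alpha> = 0" "F \<beta> = 0" and Fnn: "\<And>z. z \<in> {\<alpha>..\<beta>} \<Longrightarrow> 0 \<le> F z"
    using ts by (auto simp: trop_series_def)
  have Hsub: "\<And>x. x \<in> H \<Longrightarrow> \<alpha> < x \<and> x < \<beta>" by (auto simp: H_def nonsmooth_def)
  have aH: "a \<in> H \<or> a = \<alpha>" and bH: "b \<in> H \<or> b = \<beta>" using ab by (auto simp: H_def)
  have aa: "\<alpha> \<le> a" using aH Hsub by force
  have bb: "b \<le> \<beta>" using bH Hsub by force
  have pint: "\<alpha> < p" "p < \<beta>" using ab by auto
  have noH: "\<And>x. a < x \<Longrightarrow> x < b \<Longrightarrow> x \<notin> H" using ab(8) by (auto simp: H_def)
  have diff_iff: "\<And>x. \<alpha> < x \<Longrightarrow> x < \<beta> \<Longrightarrow> x \<in> H \<longleftrightarrow> \<not> F differentiable (at x)"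
    by (auto simp: H_def nonsmooth_def)
  have loclin: "\<exists>s::int. A s + x * of_int s = F x \<and> eventually (\<lambda>z. F z = F x + of_int s * (z - x)) (nhds x)"
    if x: "\<alpha> < x" "x < \<beta>" "x \<notin> H" for x
  proof -
    obtain l r :: int where lr: "r \<le> l" "A l + x * of_int l = F x" "A r + x * of_int r = F x"
      and L: "eventually (\<lambda>z. z \<le> x \<longrightarrow> F z = F x + of_int l * (z - x)) (nhds x)"
      and R: "eventually (\<lambda>z. x \<le> z \<longrightarrow> F z = F x + of_int r * (z - x)) (nhds x)"
      using local_lemma[OF ts x(1,2)] unfolding A_def by blast
    have "F differentiable (at x)" using diff_iff[OF x(1,2)] x(3) by auto
    then have "real_of_int l = of_int r" using kink_lemma(3)[OF L R] by simp
    then have "l = r" by simp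
    have "eventually (\<lambda>z. F z = F x + of_int l * (z - x)) (nhds x)"
      using eventually_conj[OF L R] by (rule eventually_mono) (use \<open>l = r\<close> in auto)
    then show ?thesis using lr by blast
  qed
  have pH: "p \<notin> H" using ab by (simp add: H_def)
  obtain w :: int where wp: "A w + p * of_int w = F p"
    and evp: "eventually (\<lambda>z. F z = F p + of_int w * (z - p)) (nhds p)"
    using loclin[OF pint pH] by blast
  have derlocal: "\<exists>s::int. \<exists>d>0. \<forall>y. dist y x < d \<longrightarrow> (F has_real_derivative of_int s) (at y)"
    if x: "a < x" "x < b" for x
  proof -
    have xi: "\<alpha> < x" "x < \<beta>" "x \<notin> H" using x aa bb noH by auto
    obtain s :: int where "eventually (\<lambda>z. F z = F x + of_int s * (z - x)) (nhds x)"
      using loclin[OF xi] by blast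
    then obtain d where d: "d > 0" "\<And>z. dist z x < d \<Longrightarrow> F z = F x + of_int s * (z - x)"
      unfolding eventually_nhds_metric by blast
    have "(F has_real_derivative of_int s) (at y)" if y: "dist y x < d" for y
    proof (rule has_field_derivative_transform_within_open[of "\<lambda>z. F x + of_int s * (z - x)" _ _ "ball x d"])
      show "((\<lambda>z. F x + of_int s * (z - x)) has_real_derivative of_int s) (at y)"
        by (auto intro!: derivative_eq_intros)
      show "open (ball x d)" by simp
      show "y \<in> ball x d" using y by (simp add: dist_commute)
      show "\<And>z. z \<in> ball x d \<Longrightarrow> F x + of_int s * (z - x) = F z"
        by (metis d(2) dist_commute mem_ball)
    qed
    then show ?thesis using d by blast
  qed
  have derp: "(F has_real_derivative of_int w) (at p)"
  proof -
    have "((\<lambda>z. F p + of_int w * (z - p)) has_real_derivative of_int w) (at p)"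
      by (auto intro!: derivative_eq_intros)
    then show ?thesis using DERIV_cong_ev[OF refl evp refl] by simp
  qed
  have sig: "\<forall>x\<in>{a<..<b}. eventually (\<lambda>y. deriv F x = deriv F y) (at x within {a<..<b})"
  proof
    fix x assume "x \<in> {a<..<b}"
    then obtain s :: int and d where d: "d > 0" "\<And>y. dist y x < d \<Longrightarrow> (F has_real_derivative of_int s) (at y)"
      using derlocal by force
    have "deriv F x = of_int s" using d(2)[of x] d(1) by (simp add: DERIV_imp_deriv)
    moreover have "\<And>y. dist y x < d \<Longrightarrow> deriv F y = of_int s" using d(2) by (simp add: DERIV_imp_deriv)
    ultimately show "eventually (\<lambda>y. deriv F x = deriv F y) (at x within {a<..<b})"
      unfolding eventually_at using d(1) by auto
  qed
  have derw: "(F has_real_derivative of_int w) (at x)" if x: "a < x" "x < b" for x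
  proof -
    have "deriv F x = deriv F p"
      by (rule connected_local_const[OF connected_Ioo _ _ sig]) (use x ab in auto)
    also have "\<dots> = of_int w" using derp by (simp add: DERIV_imp_deriv)
    finally have e: "deriv F x = of_int w" .
    obtain s :: int and d where d: "d > 0" "\<And>y. dist y x < d \<Longrightarrow> (F has_real_derivative of_int s) (at y)"
      using derlocal[OF x] by force
    have "(F has_real_derivative of_int s) (at x)" using d by simp
    then show ?thesis using e by (metis DERIV_imp_deriv)
  qed
  have Fab: "F x = A w + x * of_int w" if x: "a < x" "x < b" for x
  proof -
    define g where "g z = F z - (A w + z * of_int w)" for z
    have "\<exists>k. \<forall>x\<in>{a<..<b}. g x = k"
    proof (rule has_field_derivative_zero_constant)
      show "convex {a<..<b}" by simp
      fix y assume "y \<in> {a<..<b}"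
      then have "(F has_real_derivative of_int w) (at y)" using derw by auto
      then have "(g has_real_derivative of_int w - of_int w) (at y)"
        unfolding g_def by (auto intro!: derivative_eq_intros)
      then show "(g has_real_derivative 0) (at y within {a<..<b})"
        by (simp add: has_field_derivative_at_within)
    qed
    then obtain k where k: "\<And>x. x \<in> {a<..<b} \<Longrightarrow> g x = k" by blast
    have "g p = 0" using wp by (simp add: g_def)
    then have "g x = 0" using k[of p] k[of x] x ab by auto
    then show ?thesis by (simp add: g_def)
  qed
  have Fa: "F a = A w + a * of_int w"
    unfolding A_def by (rule endpt_left[OF ts aa, of "p - a"]) (use Fab ab bb in \<open>auto simp: A_def\<close>)
  have Fb: "F b = A w + b * of_int w"
    unfolding A_def by (rule endpt_right[OF ts bb, of "b - p"]) (use Fab ab aa in \<open>auto simp: A_def\<close>)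
  have FL: "\<And>z. a \<le> z \<Longrightarrow> z \<le> b \<Longrightarrow> F z = A w + z * of_int w"
    using Fa Fb Fab by (metis order_le_less)
  have ablt: "a < b" using ab(4,5) by linarith
  have Fa_lin: "\<And>z. A w + z * of_int w = F a + of_int w * (z - a)" using Fa by (simp add: algebra_simps)
  have Fb_lin: "\<And>z. A w + z * of_int w = F b + of_int w * (z - b)" using Fb by (simp add: algebra_simps)
  have E4a: "F z \<le> F a + of_int (w + 1) * (z - a)" if z: "z \<in> {\<alpha>..\<beta>}" for z
  proof (cases "a \<le> z")
    case True
    have "F z \<le> F a + of_int w * (z - a)" using E1'[OF z, of w] Fa_lin by simp
    also have "\<dots> \<le> F a + of_int (w + 1) * (z - a)" using True by (simp add: algebra_simps)
    finally show ?thesis .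
  next
    case False
    then have "a \<noteq> \<alpha>" using z by auto
    then have aH': "a \<in> H" using aH by auto
    then have ai: "\<alpha> < a" "a < \<beta>" using Hsub by auto
    obtain l r :: int where lr: "r \<le> l" "A l + a * of_int l = F a" "A r + a * of_int r = F a"
      and L: "eventually (\<lambda>z. z \<le> a \<longrightarrow> F z = F a + of_int l * (z - a)) (nhds a)"
      and R: "eventually (\<lambda>z. a \<le> z \<longrightarrow> F z = F a + of_int r * (z - a)) (nhds a)"
      using local_lemma[OF ts ai] unfolding A_def by blast
    have "\<not> F differentiable (at a)" using diff_iff[OF ai] aH' by simp
    then have lnr: "l \<noteq> r" using kink_lemma(3)[OF L R] by auto
    obtain d where d: "d > 0" "\<And>y. dist y a < d \<Longrightarrow> a \<le> y \<longrightarrow> F y = F a + of_int r * (y - a)"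
      using R unfolding eventually_nhds_metric by blast
    define z0 where "z0 = a + min d (b - a) / 2"
    have z0: "a < z0" "z0 < b" "dist z0 a < d" using d(1) ablt by (auto simp: z0_def dist_real_def min_def field_simps)
    have "F z0 = F a + of_int r * (z0 - a)" using d(2)[OF z0(3)] z0 by simp
    moreover have "F z0 = F a + of_int w * (z0 - a)" using FL[of z0] z0 Fa_lin by simp
    ultimately have "of_int r * (z0 - a) = of_int w * (z0 - a)" by linarith
    then have "r = w" using z0(1) by auto
    then have lw: "w + 1 \<le> l" using lr lnr by simp
    have "F z \<le> A l + z * of_int l" by (rule E1'[OF z])
    also have "\<dots> = F a + of_int l * (z - a)" using lr by (simp add: algebra_simps)
    also have "\<dots> \<le> F a + of_int (w + 1) * (z - a)"
      using lw False by (simp add: mult_right_mono_neg)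
    finally show ?thesis .
  qed
  have E4b: "F z \<le> F b + of_int (w - 1) * (z - b)" if z: "z \<in> {\<alpha>..\<beta>}" for z
  proof (cases "z \<le> b")
    case True
    have "F z \<le> F b + of_int w * (z - b)" using E1'[OF z, of w] Fb_lin by simp
    also have "\<dots> \<le> F b + of_int (w - 1) * (z - b)" using True by (simp add: algebra_simps)
    finally show ?thesis .
  next
    case False
    then have "b \<noteq> \<beta>" using z by auto
    then have bH': "b \<in> H" using bH by auto
    then have bi: "\<alpha> < b" "b < \<beta>" using Hsub by auto
    obtain l r :: int where lr: "r \<le> l" "A l + b * of_int l = F b" "A r + b * of_int r = F b"
      and L: "eventually (\<lambda>z. z \<le> b \<longrightarrow> F z = F b + of_int l * (z - b)) (nhds b)"
      and R: "eventually (\<lambda>z. b \<le> z \<longrightarrow> F z = F b + of_int r * (z - b)) (nhds b)"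
      using local_lemma[OF ts bi] unfolding A_def by blast
    have "\<not> F differentiable (at b)" using diff_iff[OF bi] bH' by simp
    then have lnr: "l \<noteq> r" using kink_lemma(3)[OF L R] by auto
    obtain d where d: "d > 0" "\<And>y. dist y b < d \<Longrightarrow> y \<le> b \<longrightarrow> F y = F b + of_int l * (y - b)"
      using L unfolding eventually_nhds_metric by blast
    define z0 where "z0 = b - min d (b - a) / 2"
    have z0: "a < z0" "z0 < b" "dist z0 b < d" using d(1) ablt by (auto simp: z0_def dist_real_def min_def field_simps)
    have "F z0 = F b + of_int l * (z0 - b)" using d(2)[OF z0(3)] z0 by simp
    moreover have "F z0 = F b + of_int w * (z0 - b)" using FL[of z0] z0 Fb_lin by simp
    ultimately have "of_int l * (z0 - b) = of_int w * (z0 - b)" by linarith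
    then have "l = w" using z0(2) by auto
    then have rw: "r \<le> w - 1" using lr lnr by simp
    have "F z \<le> A r + z * of_int r" by (rule E1'[OF z])
    also have "\<dots> = F b + of_int r * (z - b)" using lr by (simp add: algebra_simps)
    also have "\<dots> \<le> F b + of_int (w - 1) * (z - b)"
      using rw False by (simp add: mult_right_mono)
    finally show ?thesis .
  qed
  have aO: "a \<in> {\<alpha>..\<beta>}" and bO: "b \<in> {\<alpha>..\<beta>}" using aa bb ab by auto
  have Aw1: "A (w + 1) = F a - a * of_int (w + 1)"
  proof (rule order.antisym)
    show "A (w + 1) \<le> F a - a * of_int (w + 1)"
      unfolding A_def using E4a by (intro Aub) (use ab in \<open>auto simp: algebra_simps\<close>)
    show "F a - a * of_int (w + 1) \<le> A (w + 1)" using E1'[OF aO, of "w+1"] by simp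
  qed
  have Aw2: "A (w - 1) = F b - b * of_int (w - 1)"
  proof (rule order.antisym)
    show "A (w - 1) \<le> F b - b * of_int (w - 1)"
      unfolding A_def using E4b by (intro Aub) (use ab in \<open>auto simp: algebra_simps\<close>)
    show "F b - b * of_int (w - 1) \<le> A (w - 1)" using E1'[OF bO, of "w-1"] by simp
  qed
  have lowa: "\<And>v. F a - a * of_int v \<le> A v" using E1'[OF aO] by (simp add: algebra_simps)
  have lowb: "\<And>v. F b - b * of_int v \<le> A v" using E1'[OF bO] by (simp add: algebra_simps)
  have c: "0 < c" "c \<le> p - a" "c \<le> b - p" "a + c \<le> b - c" using ab(4,5) by (auto simp: c_def min_def)
  have Fp_a: "F p = F a + of_int w * (p - a)" using FL[of p] ab(4,5) Fa_lin by simp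
  have Fp_b: "F p = F b + of_int w * (p - b)" using FL[of p] ab(4,5) Fb_lin by simp
  have Ip: "Inf ((\<lambda>u. A u + p * of_int u) ` (UNIV - {w})) = F p + c"
  proof (rule cInf_eq_non_empty)
    have "w + 1 \<in> UNIV - {w}" by simp
    then show "(\<lambda>u. A u + p * of_int u) ` (UNIV - {w}) \<noteq> {}" by blast
  next
    fix t assume "t \<in> (\<lambda>u. A u + p * of_int u) ` (UNIV - {w})"
    then obtain u where u: "u \<noteq> w" "t = A u + p * of_int u" by auto
    show "F p + c \<le> t"
    proof (cases "w < u")
      case True
      then have "of_int (w + 1) * (p - a) \<le> of_int u * (p - a)"
        using ab(4) by (intro mult_right_mono) auto
      then show ?thesis using lowa[of u] u c Fp_a by (simp add: algebra_simps)
    next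
      case False
      then have "u \<le> w - 1" using u by simp
      then have "of_int (w - 1) * (p - b) \<le> of_int u * (p - b)"
        using ab(5) by (intro mult_right_mono_neg) auto
      then show ?thesis using lowb[of u] u c Fp_b by (simp add: algebra_simps)
    qed
  next
    fix y assume y: "\<And>t. t \<in> (\<lambda>u. A u + p * of_int u) ` (UNIV - {w}) \<Longrightarrow> y \<le> t"
    have "y \<le> A (w + 1) + p * of_int (w + 1)" by (rule y, rule image_eqI[where x="w+1"]) auto
    then have y1: "y \<le> F p + (p - a)" using Aw1 Fp_a by (simp add: algebra_simps)
    have "y \<le> A (w - 1) + p * of_int (w - 1)" by (rule y, rule image_eqI[where x="w-1"]) auto
    then have y2: "y \<le> F p + (b - p)" using Aw2 Fp_b by (simp add: algebra_simps)
    show "y \<le> F p + c" using y1 y2 by (simp add: c_def)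
  qed
  have THEw: "(THE w'::int. \<exists>\<epsilon>>0. \<forall>z. \<bar>z - p\<bar> < \<epsilon> \<longrightarrow> F z = A w' + z * of_int w') = w"
  proof -
    obtain d where d: "d > 0" "\<And>z. dist z p < d \<Longrightarrow> F z = F p + of_int w * (z - p)"
      using evp unfolding eventually_nhds_metric by blast
    have dw: "F z = A w + z * of_int w" if z: "\<bar>z - p\<bar> < d" for z
    proof -
      have "F z = F p + of_int w * (z - p)" using d(2)[of z] z by (simp add: dist_real_def)
      then show ?thesis using wp by (simp add: algebra_simps)
    qed
    show ?thesis
    proof (rule the_equality)
      show "\<exists>\<epsilon>>0. \<forall>z. \<bar>z - p\<bar> < \<epsilon> \<longrightarrow> F z = A w + z * of_int w" using d(1) dw by blast
    next
      fix w' :: int assume "\<exists>\<epsilon>>0. \<forall>z. \<bar>z - p\<bar> < \<epsilon> \<longrightarrow> F z = A w' + z * of_int w'"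
      then obtain e where e: "e > 0" "\<And>z. \<bar>z - p\<bar> < e \<Longrightarrow> F z = A w' + z * of_int w'" by blast
      define t where "t = min d e / 2"
      have t: "0 < t" "t < d" "t < e" using d(1) e(1) by (auto simp: t_def min_def)
      have "F (p + t) = A w + (p + t) * of_int w" using dw t by simp
      moreover have "F (p + t) = A w' + (p + t) * of_int w'" using e(2) t by simp
      moreover have "F p = A w + p * of_int w" using dw d(1) by simp
      moreover have "F p = A w' + p * of_int w'" using e by simp
      ultimately have "t * of_int w = t * of_int w'" by (simp only: distrib_right)
      then show "w' = w" using t by simp
    qed
  qed
  have diffp: "F differentiable (at p)" using diff_iff[OF pint] pH by simp
  define B where "B v = (if v = w then F p + c - p * of_int w else A v)" for v
  define G where "G = Gop \<alpha> \<beta> p F"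
  have Gdef: "G = (\<lambda>z. Inf (range (\<lambda>v. B v + z * of_int v)))"
    unfolding G_def Gop_def Let_def A_def[symmetric] THEw Ip using diffp
    by (simp add: B_def)
  define D where "D = Dfun a b c"
  have D_in: "D z = min (min (z - a) (b - z)) c" if "a \<le> z" "z \<le> b" for z
    using that c(1) by (simp add: D_def Dfun_def)
  have D_out: "D z = 0" if "z \<le> a \<or> b \<le> z" for z
    using that c(1) by (auto simp: D_def Dfun_def)
  have D_nn: "0 \<le> D z" for z by (simp add: D_def Dfun_def)
  have Gval: "(\<forall>v. F z + D z \<le> B v + z * of_int v) \<and>
      (\<forall>y. (\<forall>v. y \<le> B v + z * of_int v) \<longrightarrow> y \<le> F z + D z)" if z: "z \<in> {\<alpha>..\<beta>}" for z
  proof (intro conjI allI impI)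
    fix v
    show "F z + D z \<le> B v + z * of_int v"
    proof (cases "a \<le> z \<and> z \<le> b")
      case True
      note Dz = D_in[OF conjunct1[OF True] conjunct2[OF True]]
      have Fz: "F z = A w + z * of_int w" using FL True by simp
      show ?thesis
      proof (cases "v = w")
        case True
        then show ?thesis using Fz Dz wp by (simp add: B_def algebra_simps)
      next
        case vw: False
        show ?thesis
        proof (cases "w < v")
          case True
          then have "of_int (w + 1) * (z - a) \<le> of_int v * (z - a)"
            using \<open>a \<le> z \<and> z \<le> b\<close> by (intro mult_right_mono) auto
          then show ?thesis using lowa[of v] vw Dz Fz Fa_lin[of z] by (simp add: B_def algebra_simps)
        next
          case False
          then have "v \<le> w - 1" using vw by simp
          then have "of_int (w - 1) * (z - b) \<le> of_int v * (z - b)"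
            using \<open>a \<le> z \<and> z \<le> b\<close> by (intro mult_right_mono_neg) auto
          then show ?thesis using lowb[of v] vw Dz Fz Fb_lin[of z] by (simp add: B_def algebra_simps)
        qed
      qed
    next
      case False
      then have "D z = 0" using D_out by auto
      moreover have "F z \<le> A v + z * of_int v" by (rule E1'[OF z])
      moreover have "A v \<le> B v" using Ip wp c(1) by (simp add: B_def algebra_simps)
      ultimately show ?thesis by simp
    qed
  next
    fix y assume y: "\<forall>v. y \<le> B v + z * of_int v"
    have y1: "y \<le> F a + of_int (w + 1) * (z - a)"
      using y[rule_format, of "w+1"] Aw1 by (simp add: B_def algebra_simps)
    have y2: "y \<le> F b + of_int (w - 1) * (z - b)"
      using y[rule_format, of "w-1"] Aw2 by (simp add: B_def algebra_simps)
    have y3: "y \<le> A w + z * of_int w + c"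
      using y[rule_format, of w] wp by (simp add: B_def algebra_simps)
    show "y \<le> F z + D z"
    proof (cases "a \<le> z \<and> z \<le> b")
      case True
      note Dz = D_in[OF conjunct1[OF True] conjunct2[OF True]]
      have Fz: "F z = A w + z * of_int w" using FL True by simp
      have "y \<le> F z + (z - a)" using y1 Fz Fa_lin[of z] by (simp add: algebra_simps)
      moreover have "y \<le> F z + (b - z)" using y2 Fz Fb_lin[of z] by (simp add: algebra_simps)
      moreover have "y \<le> F z + c" using y3 Fz by simp
      ultimately show ?thesis using Dz by simp
    next
      case False
      then have Dz: "D z = 0" using D_out by auto
      have "y \<le> A v + z * of_int v" for v
      proof (cases "v = w")
        case True
        show ?thesis
        proof (cases "z < a")
          case True
          have "of_int (w + 1) * (z - a) \<le> of_int w * (z - a)"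
            using True by (intro mult_right_mono_neg) auto
          then show ?thesis using y1 Fa_lin[of z] \<open>v = w\<close> by simp
        next
          case False
          then have "b < z" using \<open>\<not> (a \<le> z \<and> z \<le> b)\<close> by simp
          have "of_int (w - 1) * (z - b) \<le> of_int w * (z - b)"
            using \<open>b < z\<close> by (intro mult_right_mono) auto
          then show ?thesis using y2 Fb_lin[of z] \<open>v = w\<close> by simp
        qed
      next
        case False
        then show ?thesis using y[rule_format, of v] by (simp add: B_def)
      qed
      then have "y \<le> F z" by (rule E2'[OF z])
      then show ?thesis using Dz by simp
    qed
  qed
  have GFD: "G z = F z + D z" if z: "z \<in> {\<alpha>..\<beta>}" for z
    unfolding Gdef using Gval[OF z] by (intro cInf_eq_non_empty) auto
  have Gts: "trop_series \<alpha> \<beta> G"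
    unfolding trop_series_def
  proof (intro conjI ballI exI)
    show "0 \<le> G z" if "z \<in> {\<alpha>..\<beta>}" for z using GFD[OF that] Fnn[OF that] D_nn[of z] by simp
    show "G \<alpha> = 0" using GFD[of \<alpha>] F0 D_out[of \<alpha>] aa ab(1) by simp
    show "G \<beta> = 0" using GFD[of \<beta>] F0 D_out[of \<beta>] bb ab(1) by simp
    show "is_inf_int (G z) (\<lambda>v. B v + z * of_int v)" if "z \<in> {\<alpha>..\<beta>}" for z
      using Gval[OF that] GFD[OF that] by (simp add: is_inf_int_def)
  qed
  have locG: "Mfun \<alpha> \<beta> F x = ereal (mult F x) \<and>
      Mfun \<alpha> \<beta> G x = ereal (mult F x + (dlf a b c x - drf a b c x)) \<and>
      (x \<in> nonsmooth \<alpha> \<beta> G \<longrightarrow> x \<in> H \<or> dlf a b c x \<noteq> drf a b c x)"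
    if xi: "\<alpha> < x" "x < \<beta>" for x
  proof -
    obtain l r :: int where lr: "r \<le> l"
      and L: "eventually (\<lambda>z. z \<le> x \<longrightarrow> F z = F x + of_int l * (z - x)) (nhds x)"
      and R: "eventually (\<lambda>z. x \<le> z \<longrightarrow> F z = F x + of_int r * (z - x)) (nhds x)"
      using local_lemma[OF ts xi] by blast
    have multF: "mult F x = of_int l - of_int r"
      unfolding mult_def using kink_lemma(1,2)[OF L R] by simp
    have diffF: "F differentiable (at x) \<longleftrightarrow> real_of_int l = of_int r" by (rule kink_lemma(3)[OF L R])
    have evO: "eventually (\<lambda>z. z \<in> {\<alpha>..\<beta>}) (nhds x)"
      unfolding eventually_nhds_metric dist_real_def
      by (intro exI[of _ "min (x - \<alpha>) (\<beta> - x)"]) (use xi in auto)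
    have xO: "x \<in> {\<alpha>..\<beta>}" using xi by auto
    have DL: "eventually (\<lambda>z. z \<le> x \<longrightarrow> D z = D x + dlf a b c x * (z - x)) (nhds x)"
      unfolding D_def by (rule D_left[OF c(1) c(4)])
    have DR: "eventually (\<lambda>z. x \<le> z \<longrightarrow> D z = D x + drf a b c x * (z - x)) (nhds x)"
      unfolding D_def by (rule D_right[OF c(1) c(4)])
    have LG: "eventually (\<lambda>z. z \<le> x \<longrightarrow> G z = G x + (of_int l + dlf a b c x) * (z - x)) (nhds x)"
      using eventually_conj[OF L eventually_conj[OF DL evO]]
      by (rule eventually_mono) (auto simp: GFD GFD[OF xO] algebra_simps)
    have RG: "eventually (\<lambda>z. x \<le> z \<longrightarrow> G z = G x + (of_int r + drf a b c x) * (z - x)) (nhds x)"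
      using eventually_conj[OF R eventually_conj[OF DR evO]]
      by (rule eventually_mono) (auto simp: GFD GFD[OF xO] algebra_simps)
    have multG: "mult G x = (of_int l + dlf a b c x) - (of_int r + drf a b c x)"
      unfolding mult_def using kink_lemma(1,2)[OF LG RG] by simp
    have diffG: "G differentiable (at x) \<longleftrightarrow> of_int l + dlf a b c x = of_int r + drf a b c x"
      by (rule kink_lemma(3)[OF LG RG])
    have nsF: "x \<in> H \<longleftrightarrow> \<not> F differentiable (at x)" using diff_iff[OF xi] .
    have nsG: "x \<in> nonsmooth \<alpha> \<beta> G \<longleftrightarrow> \<not> G differentiable (at x)"
      using xi by (simp add: nonsmooth_def)
    have xne: "x \<noteq> \<alpha>" "x \<noteq> \<beta>" using xi by auto
    have MF: "Mfun \<alpha> \<beta> F x = ereal (mult F x)"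
      unfolding Mfun_def using xne nsF diffF multF by (auto simp: H_def)
    have MG: "Mfun \<alpha> \<beta> G x = ereal (mult F x + (dlf a b c x - drf a b c x))"
      unfolding Mfun_def using xne nsG diffG multG multF by auto
    have "x \<in> nonsmooth \<alpha> \<beta> G \<longrightarrow> x \<in> H \<or> dlf a b c x \<noteq> drf a b c x"
      using nsG diffG nsF diffF by auto
    then show ?thesis using MF MG by blast
  qed
  have finG: "finite (nonsmooth \<alpha> \<beta> G)"
  proof (rule finite_subset[of _ "H \<union> {a, b, a + c, b - c}"])
    show "nonsmooth \<alpha> \<beta> G \<subseteq> H \<union> {a, b, a + c, b - c}"
    proof
      fix x assume x: "x \<in> nonsmooth \<alpha> \<beta> G"
      then have xi: "\<alpha> < x" "x < \<beta>" by (auto simp: nonsmooth_def)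
      have "x \<in> H \<or> dlf a b c x \<noteq> drf a b c x" using locG[OF xi] x by blast
      moreover have "dlf a b c x \<noteq> drf a b c x \<Longrightarrow> x \<in> {a, b, a + c, b - c}"
        using D_kink[OF c(1) c(4), of x] by (auto split: if_splits)
      ultimately show "x \<in> H \<union> {a, b, a + c, b - c}" by blast
    qed
    show "finite (H \<union> {a, b, a + c, b - c})" using finH by (simp add: H_def)
  qed
  have "trop_poly \<alpha> \<beta> G" using Gts finG by (simp add: trop_poly_def)
  moreover have "\<forall>x\<in>{\<alpha>..\<beta>}. Mfun \<alpha> \<beta> G x =
            Mfun \<alpha> \<beta> F x - (if a = x then 1 else 0) - (if b = x then 1 else 0)
              + (if a + c = x then 1 else 0) + (if b - c = x then 1 else 0)"
  proof
    fix x assume x: "x \<in> {\<alpha>..\<beta>}"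
    show "Mfun \<alpha> \<beta> G x =
            Mfun \<alpha> \<beta> F x - (if a = x then 1 else 0) - (if b = x then 1 else 0)
              + (if a + c = x then 1 else 0) + (if b - c = x then 1 else 0)"
    proof (cases "x = \<alpha> \<or> x = \<beta>")
      case True
      then show ?thesis by (auto simp: Mfun_def)
    next
      case False
      then have xi: "\<alpha> < x" "x < \<beta>" using x by auto
      have k: "dlf a b c x - drf a b c x = - (if a = x then 1 else 0) - (if b = x then 1 else 0)
              + (if a + c = x then 1 else 0) + (if b - c = x then 1 else 0)"
        by (rule D_kink[OF c(1) c(4)])
      have MF: "Mfun \<alpha> \<beta> F x = ereal (mult F x)" and MG: "Mfun \<alpha> \<beta> G x = ereal (mult F x + (dlf a b c x - drf a b c x))"
        using locG[OF xi] by auto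
      show ?thesis by (simp only: MF MG k ereal_ind)
    qed
  qed
  ultimately show ?thesis unfolding G_def by blast
qed

end
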